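(* A finite skew brace $A$ has $\Lambda(A)$ with exactly one vertex if and only if $A$ is isomorphic to a skew brace on a set $F\times\mathbb{Z}/2\mathbb{Z}$ with operations \[(f_1,k_1)+(f_2,k_2)=\big(f_1+(-1)^{k_1}f_2+k_1k_2y,\,k_1+k_2\big),\] \[(f_1,k_1)\circ(f_2,k_2)=\big(f_1+(-1)^{k_1}f_2+\psi(f_1,k_1,k_2)+k_1k_2y,\,k_1+k_2\big),\] where $F\neq\{0\}$ is a finite abelian group, $y\in F$ satisfies $2y=0$, and $\psi\colon F\times\mathbb{Z}/2\mathbb{Z}\times\mathbb{Z}/2\mathbb{Z}\to F$ is a surjective map of the form \[\psi(f,k_1,k_2)=[k_2]\big(\phi(f)-[k_1]z\big),\] with $\phi\in\operatorname{End}(F)$ and $z\in F$ satisfying $\phi(z)=\phi(y)-2z$ and $\phi(\phi(f))=-2\phi(f)$ for all $f\in F$.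
   Context: A skew brace is a triple $(A,+,\circ)$ where $(A,+)$ and $(A,\circ)$ are groups with $a\circ(b+c)=a\circ b-a+a\circ c$. $\lambda_a(b)=-a+a\circ b$ defines an action of $(A,\circ)$ on $(A,+)$ by automorphisms. $\Lambda(A)$ is the graph whose vertices are the $\lambda$-orbits of size $>1$, two distinct vertices $L_1,L_2$ adjacent iff $\gcd(|L_1|,|L_2|)\ne1$. For $k\in\mathbb{Z}/2\mathbb{Z}$, $[k]\in\{0,1\}$ denotes its representative (equivalently $[k]=\frac{1-(-1)^k}{2}$); products such as $k_1k_2y$ mean $[k_1][k_2]y$ and $(-1)^k$ is computed with any representative. *)

theory Defs
  imports "HOL-Algebra.Algebra"
begin

text \<open>A skew brace is given by a carrier set A and two binary operations
  pl (written +) and ci (written \<circ>).\<close>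

definition op_grp :: "'a set \<Rightarrow> ('a \<Rightarrow> 'a \<Rightarrow> 'a) \<Rightarrow> 'a monoid" where
  "op_grp A opr = \<lparr>carrier = A, monoid.mult = opr,
     one = (THE e. e \<in> A \<and> (\<forall>x\<in>A. opr e x = x \<and> opr x e = x))\<rparr>"

definition add_neg :: "'a set \<Rightarrow> ('a \<Rightarrow> 'a \<Rightarrow> 'a) \<Rightarrow> 'a \<Rightarrow> 'a" where
  "add_neg A pl a = inv\<^bsub>op_grp A pl\<^esub> a"

definition skew_brace :: "'a set \<Rightarrow> ('a \<Rightarrow> 'a \<Rightarrow> 'a) \<Rightarrow> ('a \<Rightarrow> 'a \<Rightarrow> 'a) \<Rightarrow> bool" where
  "skew_brace A pl ci \<longleftrightarrow>
     group (op_grp A pl) \<and> group (op_grp A ci) \<and>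
     (\<forall>a\<in>A. \<forall>b\<in>A. \<forall>c\<in>A.
        ci a (pl b c) = pl (ci a b) (pl (add_neg A pl a) (ci a c)))"

definition lam :: "'a set \<Rightarrow> ('a \<Rightarrow> 'a \<Rightarrow> 'a) \<Rightarrow> ('a \<Rightarrow> 'a \<Rightarrow> 'a) \<Rightarrow> 'a \<Rightarrow> 'a \<Rightarrow> 'a" where
  "lam A pl ci a b = pl (add_neg A pl a) (ci a b)"

definition lam_orbit :: "'a set \<Rightarrow> ('a \<Rightarrow> 'a \<Rightarrow> 'a) \<Rightarrow> ('a \<Rightarrow> 'a \<Rightarrow> 'a) \<Rightarrow> 'a \<Rightarrow> 'a set" where
  "lam_orbit A pl ci b = (\<lambda>a. lam A pl ci a b) ` A"

definition Lambda_vertices :: "'a set \<Rightarrow> ('a \<Rightarrow> 'a \<Rightarrow> 'a) \<Rightarrow> ('a \<Rightarrow> 'a \<Rightarrow> 'a) \<Rightarrow> 'a set set" where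
  "Lambda_vertices A pl ci =
     {L. \<exists>b\<in>A. L = lam_orbit A pl ci b \<and> card L > 1}"

text \<open>Edges of \<Lambda>(A) (not needed for counting vertices, included for completeness).\<close>
definition Lambda_edge :: "'a set \<Rightarrow> ('a \<Rightarrow> 'a \<Rightarrow> 'a) \<Rightarrow> ('a \<Rightarrow> 'a \<Rightarrow> 'a) \<Rightarrow> 'a set \<Rightarrow> 'a set \<Rightarrow> bool" where
  "Lambda_edge A pl ci L1 L2 \<longleftrightarrow>
     L1 \<in> Lambda_vertices A pl ci \<and> L2 \<in> Lambda_vertices A pl ci \<and> L1 \<noteq> L2 \<and>
     gcd (card L1) (card L2) \<noteq> 1"

definition brace_iso :: "'a set \<Rightarrow> ('a \<Rightarrow> 'a \<Rightarrow> 'a) \<Rightarrow> ('a \<Rightarrow> 'a \<Rightarrow> 'a) \<Rightarrow>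
    'b set \<Rightarrow> ('b \<Rightarrow> 'b \<Rightarrow> 'b) \<Rightarrow> ('b \<Rightarrow> 'b \<Rightarrow> 'b) \<Rightarrow> ('a \<Rightarrow> 'b) \<Rightarrow> bool" where
  "brace_iso A pl ci B pl' ci' h \<longleftrightarrow>
     bij_betw h A B \<and>
     (\<forall>a\<in>A. \<forall>b\<in>A. h (pl a b) = pl' (h a) (h b) \<and> h (ci a b) = ci' (h a) (h b))"

text \<open>Z/2Z is represented by {0,1} :: nat set, with addition (k1+k2) mod 2;
  [k] is k itself and (-1)^k f is f or -f according to the parity of k.
  The abelian group F is a HOL-Algebra structure written multiplicatively
  (\<otimes> is +, \<one> is 0, inv is negation).\<close>

definition Z2 :: "nat set" where "Z2 = {0, 1}"

definition sgn_act :: "('b, 'm) monoid_scheme \<Rightarrow> nat \<Rightarrow> 'b \<Rightarrow> 'b" where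
  "sgn_act F k f = (if odd k then inv\<^bsub>F\<^esub> f else f)"

definition kk_y :: "('b, 'm) monoid_scheme \<Rightarrow> 'b \<Rightarrow> nat \<Rightarrow> nat \<Rightarrow> 'b" where
  "kk_y F y k1 k2 = (if odd k1 \<and> odd k2 then y else \<one>\<^bsub>F\<^esub>)"

definition psi_map :: "('b, 'm) monoid_scheme \<Rightarrow> ('b \<Rightarrow> 'b) \<Rightarrow> 'b \<Rightarrow> 'b \<Rightarrow> nat \<Rightarrow> nat \<Rightarrow> 'b" where
  "psi_map F phi z f k1 k2 =
     (if odd k2 then phi f \<otimes>\<^bsub>F\<^esub> inv\<^bsub>F\<^esub> (if odd k1 then z else \<one>\<^bsub>F\<^esub>) else \<one>\<^bsub>F\<^esub>)"

definition std_carrier :: "('b, 'm) monoid_scheme \<Rightarrow> ('b \<times> nat) set" where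
  "std_carrier F = carrier F \<times> Z2"

definition std_add :: "('b, 'm) monoid_scheme \<Rightarrow> 'b \<Rightarrow> 'b \<times> nat \<Rightarrow> 'b \<times> nat \<Rightarrow> 'b \<times> nat" where
  "std_add F y p q = (case p of (f1, k1) \<Rightarrow> case q of (f2, k2) \<Rightarrow>
     (f1 \<otimes>\<^bsub>F\<^esub> sgn_act F k1 f2 \<otimes>\<^bsub>F\<^esub> kk_y F y k1 k2, (k1 + k2) mod 2))"

definition std_circ :: "('b, 'm) monoid_scheme \<Rightarrow> 'b \<Rightarrow> ('b \<Rightarrow> nat \<Rightarrow> nat \<Rightarrow> 'b) \<Rightarrow>
    'b \<times> nat \<Rightarrow> 'b \<times> nat \<Rightarrow> 'b \<times> nat" where
  "std_circ F y psi p q = (case p of (f1, k1) \<Rightarrow> case q of (f2, k2) \<Rightarrow>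
     (f1 \<otimes>\<^bsub>F\<^esub> sgn_act F k1 f2 \<otimes>\<^bsub>F\<^esub> psi f1 k1 k2 \<otimes>\<^bsub>F\<^esub> kk_y F y k1 k2,
      (k1 + k2) mod 2))"

definition admissible_params :: "('b, 'm) monoid_scheme \<Rightarrow> 'b \<Rightarrow> ('b \<Rightarrow> 'b) \<Rightarrow> 'b \<Rightarrow> bool" where
  "admissible_params F y phi z \<longleftrightarrow>
     comm_group F \<and> finite (carrier F) \<and> carrier F \<noteq> {\<one>\<^bsub>F\<^esub>} \<and>
     y \<in> carrier F \<and> y \<otimes>\<^bsub>F\<^esub> y = \<one>\<^bsub>F\<^esub> \<and>
     phi \<in> hom F F \<and> z \<in> carrier F \<and>
     phi z = phi y \<otimes>\<^bsub>F\<^esub> inv\<^bsub>F\<^esub> (z \<otimes>\<^bsub>F\<^esub> z) \<and>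
     (\<forall>f\<in>carrier F. phi (phi f) = inv\<^bsub>F\<^esub> (phi f \<otimes>\<^bsub>F\<^esub> phi f)) \<and>
     (\<lambda>(f, k1, k2). psi_map F phi z f k1 k2) ` (carrier F \<times> Z2 \<times> Z2) = carrier F"

end

theory Submission
  imports Defs "HOL-Algebra.Group_Action"
begin

lemma op_grp_simps[simp]: "carrier (op_grp A opr) = A" "monoid.mult (op_grp A opr) = opr"
  by (simp_all add: op_grp_def)

locale sbrace =
  fixes A :: "'a set" and pl ci :: "'a \<Rightarrow> 'a \<Rightarrow> 'a"
  assumes sb: "skew_brace A pl ci"
begin

sublocale G: group "op_grp A pl" using sb by (simp add: skew_brace_def)
sublocale C: group "op_grp A ci" using sb by (simp add: skew_brace_def)

abbreviation "ze \<equiv> \<one>\<^bsub>op_grp A pl\<^esub>"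
abbreviation "ng \<equiv> m_inv (op_grp A pl)"
abbreviation "ic \<equiv> m_inv (op_grp A ci)"
abbreviation "lm \<equiv> lam A pl ci"

lemmas pc = G.m_closed[simplified] C.m_closed[simplified]
lemmas passoc = G.m_assoc[simplified] 
lemma zeA[simp]: "ze \<in> A" using G.one_closed by simp
lemma ngA[simp]: "a \<in> A \<Longrightarrow> ng a \<in> A" using G.inv_closed by simp
lemma icA[simp]: "a \<in> A \<Longrightarrow> ic a \<in> A" using C.inv_closed by simp
lemma plA[simp]: "a \<in> A \<Longrightarrow> b \<in> A \<Longrightarrow> pl a b \<in> A" using G.m_closed by simp
lemma ciA[simp]: "a \<in> A \<Longrightarrow> b \<in> A \<Longrightarrow> ci a b \<in> A" using C.m_closed by simp
lemma pl_assoc: "a \<in> A \<Longrightarrow> b \<in> A \<Longrightarrow> c \<in> A \<Longrightarrow> pl (pl a b) c = pl a (pl b c)"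
  using G.m_assoc by simp
lemma ci_assoc: "a \<in> A \<Longrightarrow> b \<in> A \<Longrightarrow> c \<in> A \<Longrightarrow> ci (ci a b) c = ci a (ci b c)"
  using C.m_assoc by simp
lemma pl_ze[simp]: "a \<in> A \<Longrightarrow> pl a ze = a" "a \<in> A \<Longrightarrow> pl ze a = a" using G.r_one G.l_one by simp_all
lemma pl_ng[simp]: "a \<in> A \<Longrightarrow> pl a (ng a) = ze" "a \<in> A \<Longrightarrow> pl (ng a) a = ze"
  using G.r_inv G.l_inv by simp_all
lemma pl_ng2[simp]: "a \<in> A \<Longrightarrow> b \<in> A \<Longrightarrow> pl a (pl (ng a) b) = b" "a \<in> A \<Longrightarrow> b \<in> A \<Longrightarrow> pl (ng a) (pl a b) = b"
  by (simp_all flip: pl_assoc)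
lemma ng_ng[simp]: "a \<in> A \<Longrightarrow> ng (ng a) = a" using G.inv_inv by simp
lemma ng_pl: "a \<in> A \<Longrightarrow> b \<in> A \<Longrightarrow> ng (pl a b) = pl (ng b) (ng a)" using G.inv_mult_group by simp
lemma ng_ze[simp]: "ng ze = ze" using G.inv_one by simp

lemma brace: "a \<in> A \<Longrightarrow> b \<in> A \<Longrightarrow> c \<in> A \<Longrightarrow> ci a (pl b c) = pl (ci a b) (pl (ng a) (ci a c))"
  using sb by (simp add: skew_brace_def add_neg_def)

lemma lm_def: "lm a b = pl (ng a) (ci a b)" by (simp add: lam_def add_neg_def)
lemma lmA[simp]: "a \<in> A \<Longrightarrow> b \<in> A \<Longrightarrow> lm a b \<in> A" by (simp add: lm_def)
lemma ci_lm: "a \<in> A \<Longrightarrow> b \<in> A \<Longrightarrow> ci a b = pl a (lm a b)" by (simp add: lm_def)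

lemma lm_add: "a \<in> A \<Longrightarrow> b \<in> A \<Longrightarrow> c \<in> A \<Longrightarrow> lm a (pl b c) = pl (lm a b) (lm a c)"
  by (simp add: lm_def brace pl_assoc)

lemma lm_ze[simp]: "a \<in> A \<Longrightarrow> lm a ze = ze"
proof -
  assume a: "a \<in> A"
  have "lm a ze = pl (lm a ze) (lm a ze)" using lm_add[OF a zeA zeA] by simp
  then show ?thesis using G.l_cancel_one[of "lm a ze" "lm a ze"] a by simp
qed

lemma ci_ze[simp]: "a \<in> A \<Longrightarrow> ci a ze = a" by (simp add: ci_lm)
lemma oneC: "\<one>\<^bsub>op_grp A ci\<^esub> = ze"
  using ci_ze[of "\<one>\<^bsub>op_grp A ci\<^esub>"] C.l_one[of ze] C.one_closed by simp
lemma ze_ci[simp]: "a \<in> A \<Longrightarrow> ci ze a = a" using C.l_one oneC by simp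
lemma lm_ze_left[simp]: "b \<in> A \<Longrightarrow> lm ze b = b" by (simp add: lm_def)
lemma ci_ic[simp]: "a \<in> A \<Longrightarrow> ci a (ic a) = ze" "a \<in> A \<Longrightarrow> ci (ic a) a = ze"
  using C.r_inv C.l_inv oneC by simp_all

lemma lm_neg: "a \<in> A \<Longrightarrow> b \<in> A \<Longrightarrow> lm a (ng b) = ng (lm a b)"
proof -
  assume a: "a \<in> A" and b: "b \<in> A"
  have "pl (lm a (ng b)) (lm a b) = ze" using lm_add[OF a ngA[OF b] b] a b by simp
  then show ?thesis using G.inv_equality[of "lm a (ng b)" "lm a b"] a b by simp
qed

lemma lm_comp: "a \<in> A \<Longrightarrow> b \<in> A \<Longrightarrow> c \<in> A \<Longrightarrow> lm (ci a b) c = lm a (lm b c)"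
proof -
  assume a: "a \<in> A" and b: "b \<in> A" and c: "c \<in> A"
  have "lm a (lm b c) = pl (lm a (ng b)) (lm a (ci b c))"
    using a b c by (simp add: lm_def[of b] lm_add)
  also have "\<dots> = pl (ng (lm a b)) (lm a (ci b c))" using a b by (simp add: lm_neg)
  also have "\<dots> = pl (pl (ng (ci a b)) a) (pl (ng a) (ci a (ci b c)))"
    using a b c by (simp add: lm_def ng_pl)
  also have "\<dots> = lm (ci a b) c" using a b c by (simp add: lm_def pl_assoc ci_assoc)
  finally show ?thesis by simp
qed

lemma lm_inv: "a \<in> A \<Longrightarrow> b \<in> A \<Longrightarrow> lm (ic a) (lm a b) = b"
  by (simp add: lm_comp[symmetric])


lemma pl_rcancel[simp]: "x \<in> A \<Longrightarrow> y \<in> A \<Longrightarrow> z \<in> A \<Longrightarrow> pl y x = pl z x \<longleftrightarrow> y = z"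
  using G.right_cancel by simp
lemma pl_lcancel[simp]: "x \<in> A \<Longrightarrow> y \<in> A \<Longrightarrow> z \<in> A \<Longrightarrow> pl x y = pl x z \<longleftrightarrow> y = z"
  by (metis pl_ng2(2))

lemma lm_inv2: "a \<in> A \<Longrightarrow> b \<in> A \<Longrightarrow> lm a (lm (ic a) b) = b"
proof -
  assume a: "a \<in> A" and b: "b \<in> A"
  have "lm a (lm (ic a) b) = lm (ci a (ic a)) b" using a b lm_comp[of a "ic a" b] by simp
  also have "\<dots> = b" using a b ci_ic(1)[OF a] by simp
  finally show ?thesis .
qed

lemma lm_bij: "a \<in> A \<Longrightarrow> bij_betw (lm a) A A"
  apply (rule bij_betw_byWitness[where f'="lm (ic a)"])
  using lm_inv lm_inv2 by auto

lemma restr_Bij: "a \<in> A \<Longrightarrow> restrict (lm a) A \<in> Bij A"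
proof -
  assume a: "a \<in> A"
  have "bij_betw (restrict (lm a) A) A A"
    using lm_bij[OF a] bij_betw_cong[of A "restrict (lm a) A" "lm a" A] by simp
  then show ?thesis by (simp add: Bij_def)
qed

lemma gaction: "group_action (op_grp A ci) A (\<lambda>a. restrict (lm a) A)"
  unfolding group_action_def group_hom_def group_hom_axioms_def
proof (intro conjI)
  show "group (op_grp A ci)" by (rule C.is_group)
  show "group (BijGroup A)" by (rule group_BijGroup)
  show "(\<lambda>a. restrict (lm a) A) \<in> hom (op_grp A ci) (BijGroup A)"
  proof (rule homI)
    fix a assume "a \<in> carrier (op_grp A ci)"
    then show "restrict (lm a) A \<in> carrier (BijGroup A)"
      using restr_Bij by (simp add: BijGroup_def)
  next
    fix a b assume a: "a \<in> carrier (op_grp A ci)" and b: "b \<in> carrier (op_grp A ci)"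
    have ab: "restrict (lm a) A \<in> Bij A" "restrict (lm b) A \<in> Bij A"
      using a b restr_Bij by simp_all
    have "restrict (lm (ci a b)) A = compose A (restrict (lm a) A) (restrict (lm b) A)"
      using a b by (simp add: compose_def lm_comp restrict_def fun_eq_iff)
    then show "restrict (lm (a \<otimes>\<^bsub>op_grp A ci\<^esub> b)) A =
      restrict (lm a) A \<otimes>\<^bsub>BijGroup A\<^esub> restrict (lm b) A"
      using ab by (simp add: BijGroup_def)
  qed
qed

lemma orbit_eq: "b \<in> A \<Longrightarrow> orbit (op_grp A ci) (\<lambda>a. restrict (lm a) A) b = lam_orbit A pl ci b"
proof -
  assume b: "b \<in> A"
  have "orbit (op_grp A ci) (\<lambda>a. restrict (lm a) A) b = {lm g b | g. g \<in> A}"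
    using b by (simp add: orbit_def)
  also have "\<dots> = lam_orbit A pl ci b" unfolding lam_orbit_def by blast
  finally show ?thesis .
qed

lemma orbit_dvd: "b \<in> A \<Longrightarrow> card (lam_orbit A pl ci b) dvd card A"
proof -
  assume b: "b \<in> A"
  have "card (orbit (op_grp A ci) (\<lambda>a. restrict (lm a) A) b) *
     card (stabilizer (op_grp A ci) (\<lambda>a. restrict (lm a) A) b) = order (op_grp A ci)"
    by (rule group_action.orbit_stabilizer_theorem[OF gaction b])
  then have "card (lam_orbit A pl ci b) * card (stabilizer (op_grp A ci) (\<lambda>a. restrict (lm a) A) b) = card A"
    using orbit_eq[OF b] by (simp add: order_def)
  then show ?thesis by (metis dvd_triv_left)
qed

definition Hs where "Hs = {b \<in> A. \<forall>a\<in>A. lm a b = b}"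

lemma HsA: "Hs \<subseteq> A" by (auto simp: Hs_def)
lemma fixH: "h \<in> Hs \<Longrightarrow> a \<in> A \<Longrightarrow> lm a h = h" by (auto simp: Hs_def)

lemma Hs_sub: "subgroup Hs (op_grp A pl)"
  apply (rule G.subgroupI)
  using zeA by (auto simp: Hs_def lm_neg lm_add intro!: exI[of _ ze])

lemma plH[simp]: "a \<in> Hs \<Longrightarrow> b \<in> Hs \<Longrightarrow> pl a b \<in> Hs"
  using subgroup.m_closed[OF Hs_sub] by simp
lemma ngH[simp]: "a \<in> Hs \<Longrightarrow> ng a \<in> Hs"
  using subgroup.m_inv_closed[OF Hs_sub] by simp
lemma zeH[simp]: "ze \<in> Hs"
  using subgroup.one_closed[OF Hs_sub] by simp
lemma HA[simp]: "a \<in> Hs \<Longrightarrow> a \<in> A" using HsA by auto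

lemma self_orb: "b \<in> A \<Longrightarrow> b \<in> lam_orbit A pl ci b"
  unfolding lam_orbit_def by (rule image_eqI[of _ _ ze]) auto

lemma orb_sub: "b \<in> A \<Longrightarrow> lam_orbit A pl ci b \<subseteq> A"
  unfolding lam_orbit_def by auto

lemma orb_card1: "finite A \<Longrightarrow> b \<in> A \<Longrightarrow> card (lam_orbit A pl ci b) = 1 \<longleftrightarrow> b \<in> Hs"
proof
  assume f: "finite A" and b: "b \<in> A" and c: "card (lam_orbit A pl ci b) = 1"
  then obtain x where "lam_orbit A pl ci b = {x}" by (meson card_1_singletonE)
  with self_orb[OF b] have o: "lam_orbit A pl ci b = {b}" by auto
  have "\<forall>a\<in>A. lm a b = b"
  proof
    fix a assume "a \<in> A"
    then have "lm a b \<in> lam_orbit A pl ci b" unfolding lam_orbit_def by (rule imageI)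
    then show "lm a b = b" using o by simp
  qed
  then show "b \<in> Hs" using b unfolding Hs_def by simp
next
  assume b: "b \<in> A" and h: "b \<in> Hs"
  have "lam_orbit A pl ci b = (\<lambda>a. b) ` A" unfolding lam_orbit_def
    using fixH[OF h] by (rule image_cong[OF refl])
  also have "\<dots> = {b}" using b by blast
  finally show "card (lam_orbit A pl ci b) = 1" by simp
qed

end

locale sb1 = sbrace +
  assumes fin: "finite A" and one_v: "card (Lambda_vertices A pl ci) = 1"
begin

definition "Lv = (THE L. Lambda_vertices A pl ci = {L})"

lemma Lv: "Lambda_vertices A pl ci = {Lv}"
proof -
  obtain L where "Lambda_vertices A pl ci = {L}" using one_v by (meson card_1_singletonE)
  then show ?thesis unfolding Lv_def by simp
qed

lemma orb_fin: "finite (lam_orbit A pl ci b)" unfolding lam_orbit_def using fin by simp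

lemma orb_nonH: "b \<in> A \<Longrightarrow> b \<notin> Hs \<Longrightarrow> lam_orbit A pl ci b = Lv"
proof -
  assume b: "b \<in> A" "b \<notin> Hs"
  have "card (lam_orbit A pl ci b) \<noteq> 0" using orb_fin self_orb[OF b(1)] by auto
  moreover have "card (lam_orbit A pl ci b) \<noteq> 1" using orb_card1[OF fin b(1)] b by simp
  ultimately have "card (lam_orbit A pl ci b) > 1" by linarith
  then have "lam_orbit A pl ci b \<in> Lambda_vertices A pl ci" using b unfolding Lambda_vertices_def by blast
  then show ?thesis using Lv by simp
qed

lemma Lv_eq: "Lv = A - Hs"
proof
  show "A - Hs \<subseteq> Lv" using orb_nonH self_orb by blast
  have "Lv \<in> Lambda_vertices A pl ci" using Lv by simp
  then obtain b0 where b0: "b0 \<in> A" "Lv = lam_orbit A pl ci b0" "card Lv > 1"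
    unfolding Lambda_vertices_def by blast
  have b0H: "b0 \<notin> Hs" using orb_card1[OF fin b0(1)] b0 by simp
  show "Lv \<subseteq> A - Hs"
  proof
    fix c assume "c \<in> Lv"
    then obtain a where a: "a \<in> A" "c = lm a b0" using b0 unfolding lam_orbit_def by blast
    have cA: "c \<in> A" using a b0 by simp
    have "c \<notin> Hs"
    proof
      assume "c \<in> Hs"
      then have "lm (ic a) c = c" using fixH a by simp
      then have "b0 = c" using lm_inv[OF a(1) b0(1)] a by simp
      then show False using b0H \<open>c \<in> Hs\<close> by simp
    qed
    then show "c \<in> A - Hs" using cA by simp
  qed
qed

lemma Lv_card: "card Lv > 1"
proof -
  have "Lv \<in> Lambda_vertices A pl ci" using Lv by simp
  then show ?thesis unfolding Lambda_vertices_def by blast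
qed

lemma finH: "finite Hs" using fin HsA finite_subset by blast

lemma card_eq: "card (A - Hs) = card Hs"
proof -
  obtain b0 where b0: "b0 \<in> A - Hs" using Lv_card Lv_eq by (metis card.empty ex_in_conv not_one_less_zero)
  have d: "card (A - Hs) dvd card A" using orbit_dvd[of b0] orb_nonH[of b0] b0 Lv_eq by simp
  define h where "h = card Hs"
  define m where "m = card (rcosets\<^bsub>op_grp A pl\<^esub> Hs)"
  have hm: "m * h = card A" using G.lagrange[OF Hs_sub] by (simp add: h_def m_def order_def)
  have hpos: "h > 0" using finH zeH h_def card_gt_0_iff by blast
  have cA: "card (A - Hs) = card A - h" using card_Diff_subset[OF finH HsA] h_def by simp
  have gt: "card (A - Hs) > 1" using Lv_card Lv_eq by simp
  have l: "card (A - Hs) = h * (m - 1)" using cA hm by (simp add: diff_mult_distrib2 mult.commute)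
  have "h * (m - 1) dvd h * m" using d l hm by (simp add: mult.commute)
  then have "(m - 1) dvd m" using hpos by simp
  then have "(m - 1) dvd (m - (m - 1))" by (simp add: dvd_diff_nat)
  moreover have "m \<ge> 1" using gt l by (cases m) auto
  ultimately have "(m - 1) dvd 1" by simp
  then have "m - 1 = 1" using gt l by simp
  then show ?thesis using l h_def by simp
qed

end

context sb1
begin

definition "t = (SOME x. x \<in> A - Hs)"
definition "dl a = pl (lm a t) (ng t)"
definition "y0 = pl t t"
definition "z0 = dl t"

lemma t_in: "t \<in> A" "t \<notin> Hs"
proof -
  have "A - Hs \<noteq> {}" using Lv_card Lv_eq by (metis card.empty not_one_less_zero)
  then have "t \<in> A - Hs" unfolding t_def by (meson ex_in_conv someI_ex)
  then show "t \<in> A" "t \<notin> Hs" by auto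
qed

lemma tA[simp]: "t \<in> A" using t_in by simp

lemma plt_nH: "f \<in> Hs \<Longrightarrow> pl f t \<notin> Hs"
proof
  assume f: "f \<in> Hs" and "pl f t \<in> Hs"
  then have "t \<in> Hs" using plH[OF ngH[OF f] \<open>pl f t \<in> Hs\<close>] f by simp
  then show False using t_in by simp
qed

lemma Lshape: "A - Hs = (\<lambda>h. pl h t) ` Hs"
proof -
  have sub: "(\<lambda>h. pl h t) ` Hs \<subseteq> A - Hs" using plt_nH by auto
  have inj: "inj_on (\<lambda>h. pl h t) Hs" by (rule inj_onI) simp
  have "card ((\<lambda>h. pl h t) ` Hs) = card (A - Hs)" using card_image[OF inj] card_eq by simp
  then show ?thesis using card_subset_eq[OF _ sub] fin by auto
qed

lemma decomp: "b \<in> A \<Longrightarrow> b \<notin> Hs \<Longrightarrow> \<exists>f\<in>Hs. b = pl f t"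
  using Lshape by blast

lemma orb_t: "lam_orbit A pl ci t = A - Hs"
  using orb_nonH[OF t_in] Lv_eq by simp

lemma lm_t: "a \<in> A \<Longrightarrow> dl a \<in> Hs \<and> lm a t = pl (dl a) t"
proof -
  assume a: "a \<in> A"
  have "lm a t \<in> A - Hs" using orb_t a unfolding lam_orbit_def by blast
  then obtain f where f: "f \<in> Hs" "lm a t = pl f t" using Lshape by blast
  then have "dl a = f" unfolding dl_def using pl_assoc by simp
  then show ?thesis using f by simp
qed

lemma dlH[simp]: "a \<in> A \<Longrightarrow> dl a \<in> Hs" using lm_t by simp
lemma lmt: "a \<in> A \<Longrightarrow> lm a t = pl (dl a) t" using lm_t by simp

lemma dl_surj: "f \<in> Hs \<Longrightarrow> \<exists>a\<in>A. dl a = f"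
proof -
  assume f: "f \<in> Hs"
  have "pl f t \<in> lam_orbit A pl ci t" using orb_t plt_nH[OF f] f by simp
  then obtain a where a: "a \<in> A" "pl f t = lm a t" unfolding lam_orbit_def by blast
  then have "pl f t = pl (dl a) t" using lmt by simp
  then have "dl a = f" using f a by simp
  then show ?thesis using a by blast
qed

lemma yH[simp]: "y0 \<in> Hs"
proof (rule ccontr)
  assume "y0 \<notin> Hs"
  then obtain f where f: "f \<in> Hs" "pl t t = pl f t" using decomp[of y0] unfolding y0_def by auto
  then have "t = f" by simp
  then show False using f t_in by simp
qed

lemma conj: "h \<in> Hs \<Longrightarrow> pl t h = pl (ng h) t"
proof -
  assume h: "h \<in> Hs"
  obtain a where a: "a \<in> A" "dl a = h" using dl_surj[OF h] by blast
  have "lm a (pl t t) = pl t t" using fixH[OF yH a(1)] unfolding y0_def .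
  moreover have "lm a (pl t t) = pl (pl h t) (pl h t)" using a by (simp add: lm_add lmt)
  ultimately have "pl (pl (pl h t) h) t = pl t t" using h by (simp add: pl_assoc)
  then have "pl (pl h t) h = t" using h by simp
  then have "pl h (pl t h) = t" using h by (simp add: pl_assoc)
  then have "pl (ng h) (pl h (pl t h)) = pl (ng h) t" by simp
  then show ?thesis using h by simp
qed

lemma comm0: "g \<in> Hs \<Longrightarrow> h \<in> Hs \<Longrightarrow> pl h (ng g) = pl (ng g) h"
proof -
  assume g: "g \<in> Hs" and h: "h \<in> Hs"
  obtain a where a: "a \<in> A" "dl a = h" using dl_surj[OF h] by blast
  have "lm a (pl t g) = pl (pl h t) g" using a g by (simp add: lm_add lmt fixH)
  also have "\<dots> = pl h (pl (ng g) t)" using g h by (simp add: pl_assoc conj)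
  finally have 1: "lm a (pl t g) = pl h (pl (ng g) t)" .
  have "lm a (pl t g) = lm a (pl (ng g) t)" using g conj by simp
  also have "\<dots> = pl (ng g) (pl h t)" using a g by (simp add: lm_add lmt fixH)
  finally have "pl h (pl (ng g) t) = pl (ng g) (pl h t)" using 1 by simp
  then have "pl (pl h (ng g)) t = pl (pl (ng g) h) t" using g h by (simp add: pl_assoc)
  then show ?thesis using g h by simp
qed

lemma comm: "g \<in> Hs \<Longrightarrow> h \<in> Hs \<Longrightarrow> pl g h = pl h g"
  using comm0[of "ng h" g] by simp

lemma lcomm: "a \<in> Hs \<Longrightarrow> b \<in> Hs \<Longrightarrow> c \<in> A \<Longrightarrow> pl a (pl b c) = pl b (pl a c)"
  by (simp add: pl_assoc[symmetric] comm)

lemma y2: "pl y0 y0 = ze"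
proof -
  have "pl t y0 = pl y0 t" unfolding y0_def by (simp add: pl_assoc)
  then have "pl (ng y0) t = pl y0 t" using conj[OF yH] by simp
  then have "ng y0 = y0" by simp
  then show ?thesis using pl_ng(1)[of y0] by simp
qed

lemma dl_comp: "a \<in> A \<Longrightarrow> b \<in> A \<Longrightarrow> dl (ci a b) = pl (dl a) (dl b)"
proof -
  assume a: "a \<in> A" and b: "b \<in> A"
  have "pl (dl (ci a b)) t = lm (ci a b) t" using a b by (simp add: lmt)
  also have "\<dots> = lm a (lm b t)" using a b by (simp add: lm_comp)
  also have "\<dots> = pl (pl (dl b) (dl a)) t" using a b by (simp add: lmt lm_add fixH pl_assoc)
  finally have "dl (ci a b) = pl (dl b) (dl a)" using a b by simp
  then show ?thesis using a b comm by simp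
qed

lemma ciH: "f \<in> Hs \<Longrightarrow> g \<in> Hs \<Longrightarrow> ci f g = pl f g"
  by (simp add: ci_lm fixH)

lemma dl_hom: "f \<in> Hs \<Longrightarrow> g \<in> Hs \<Longrightarrow> dl (pl f g) = pl (dl f) (dl g)"
  using dl_comp[of f g] ciH by simp

lemma dl_ze: "dl ze = ze" unfolding dl_def by simp

lemma dl_ng: "f \<in> Hs \<Longrightarrow> dl (ng f) = ng (dl f)"
proof -
  assume f: "f \<in> Hs"
  have "pl (dl (ng f)) (dl f) = ze" using dl_hom[of "ng f" f] f dl_ze by simp
  then show ?thesis using G.inv_equality[of "dl (ng f)" "dl f"] f by simp
qed

lemma dl_Ht: "f \<in> Hs \<Longrightarrow> dl (pl f t) = pl z0 (ng (dl f))"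
proof -
  assume f: "f \<in> Hs"
  have "ci t (ng f) = pl f t" using f by (simp add: ci_lm fixH conj)
  then have "dl (pl f t) = dl (ci t (ng f))" by simp
  also have "\<dots> = pl z0 (ng (dl f))" using f by (simp add: dl_comp z0_def dl_ng)
  finally show ?thesis .
qed

lemma z0H[simp]: "z0 \<in> Hs" unfolding z0_def by simp

lemma phiphi: "f \<in> Hs \<Longrightarrow> dl (dl f) = ng (pl (dl f) (dl f))"
proof -
  assume f: "f \<in> Hs"
  have "ci f t = pl (pl f (dl f)) t" using f by (simp add: ci_lm lmt pl_assoc)
  then have "dl (ci f t) = pl z0 (ng (pl (dl f) (dl (dl f))))" using f by (simp add: dl_Ht dl_hom)
  moreover have "dl (ci f t) = pl (dl f) z0" using f by (simp add: dl_comp z0_def)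
  ultimately have "pl z0 (dl f) = pl z0 (ng (pl (dl f) (dl (dl f))))" using f comm by simp
  then have "dl f = ng (pl (dl f) (dl (dl f)))" using f by simp
  then have "ng (dl f) = ng (ng (pl (dl f) (dl (dl f))))" by simp
  then have e: "ng (dl f) = pl (dl f) (dl (dl f))" using f by simp
  have "dl (dl f) = pl (ng (dl f)) (pl (dl f) (dl (dl f)))" using f by simp
  also have "\<dots> = pl (ng (dl f)) (ng (dl f))" using e by simp
  finally show ?thesis using f by (simp add: ng_pl)
qed

lemma phiz: "dl z0 = pl (dl y0) (ng (pl z0 z0))"
proof -
  have "ci t t = pl t (pl z0 t)" by (simp add: ci_lm lmt z0_def)
  also have "\<dots> = pl (ng z0) y0" by (simp add: conj y0_def flip: pl_assoc)
  finally have ct: "ci t t = pl (ng z0) y0" .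
  have "pl z0 z0 = dl (ci t t)" by (simp add: dl_comp z0_def)
  also have "\<dots> = pl (ng (dl z0)) (dl y0)" using ct by (simp add: dl_hom dl_ng)
  finally have e: "pl z0 z0 = pl (ng (dl z0)) (dl y0)" .
  have "dl y0 = pl (dl z0) (pl (ng (dl z0)) (dl y0))" by simp
  also have "\<dots> = pl (dl z0) (pl z0 z0)" using e by simp
  finally have "pl (dl y0) (ng (pl z0 z0)) = pl (pl (dl z0) (pl z0 z0)) (ng (pl z0 z0))" by simp
  also have "\<dots> = dl z0" by (simp add: pl_assoc)
  finally show ?thesis by simp
qed

end

context sb1
begin

definition "F0 = (op_grp A pl)\<lparr>carrier := Hs\<rparr>"

lemma F0_simps[simp]: "carrier F0 = Hs" "monoid.mult F0 = pl" "one F0 = ze"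
  by (simp_all add: F0_def)

lemma F0_inv[simp]: "h \<in> Hs \<Longrightarrow> inv\<^bsub>F0\<^esub> h = ng h"
  unfolding F0_def using G.m_inv_consistent[OF Hs_sub] by simp

lemma F0_comm: "comm_group F0"
proof -
  have "group F0" unfolding F0_def by (rule G.subgroup_imp_group[OF Hs_sub])
  then show ?thesis by (rule group.group_comm_groupI) (simp add: comm)
qed

lemma card_H: "card Hs > 1" using card_eq Lv_card Lv_eq by simp

lemma phiz2: "pl (dl y0) (ng (dl z0)) = pl z0 z0"
proof -
  have "ng (dl z0) = pl (pl z0 z0) (ng (dl y0))" by (simp add: phiz ng_pl)
  then have "pl (dl y0) (ng (dl z0)) = pl (dl y0) (pl (ng (dl y0)) (pl z0 z0))" by (simp add: comm)
  then show ?thesis by simp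
qed

lemma psi_img: "(\<lambda>(f, k1, k2). psi_map F0 dl z0 f k1 k2) ` (carrier F0 \<times> Z2 \<times> Z2) = carrier F0"
proof
  show "(\<lambda>(f, k1, k2). psi_map F0 dl z0 f k1 k2) ` (carrier F0 \<times> Z2 \<times> Z2) \<subseteq> carrier F0"
    by (auto simp: psi_map_def)
  show "carrier F0 \<subseteq> (\<lambda>(f, k1, k2). psi_map F0 dl z0 f k1 k2) ` (carrier F0 \<times> Z2 \<times> Z2)"
  proof
    fix h assume "h \<in> carrier F0"
    then have h: "h \<in> Hs" by simp
    obtain a where a: "a \<in> A" "dl a = h" using dl_surj[OF h] by blast
    show "h \<in> (\<lambda>(f, k1, k2). psi_map F0 dl z0 f k1 k2) ` (carrier F0 \<times> Z2 \<times> Z2)"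
    proof (cases "a \<in> Hs")
      case True
      have "psi_map F0 dl z0 a 0 1 = h" using a True h by (simp add: psi_map_def)
      then show ?thesis using True by (force simp: Z2_def)
    next
      case False
      then obtain f where f: "f \<in> Hs" "a = pl f t" using decomp a by blast
      define f' where "f' = pl (pl y0 (ng z0)) (ng f)"
      have f'H: "f' \<in> Hs" unfolding f'_def using f by simp
      have "dl f' = pl (pl (dl y0) (ng (dl z0))) (ng (dl f))" unfolding f'_def using f
        by (simp add: dl_hom dl_ng)
      also have "\<dots> = pl (pl z0 z0) (ng (dl f))" by (simp add: phiz2)
      finally have d: "dl f' = pl (pl z0 z0) (ng (dl f))" .
      have "psi_map F0 dl z0 f' 1 1 = pl (dl f') (ng z0)" using f'H by (simp add: psi_map_def)
      also have "\<dots> = pl (pl z0 (ng (dl f))) (pl z0 (ng z0))" using f d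
        by (simp add: pl_assoc comm lcomm)
      also have "\<dots> = pl z0 (ng (dl f))" using f by simp
      also have "\<dots> = h" using a f by (simp add: dl_Ht)
      finally show ?thesis using f'H by (force simp: Z2_def)
    qed
  qed
qed

lemma adm: "admissible_params F0 y0 dl z0"
  unfolding admissible_params_def
proof (intro conjI)
  show "comm_group F0" by (rule F0_comm)
  show "finite (carrier F0)" using finH by simp
  show "carrier F0 \<noteq> {\<one>\<^bsub>F0\<^esub>}" using card_H by auto
  show "y0 \<in> carrier F0" by simp
  show "y0 \<otimes>\<^bsub>F0\<^esub> y0 = \<one>\<^bsub>F0\<^esub>" using y2 by simp
  show "dl \<in> hom F0 F0" by (rule homI) (simp_all add: dl_hom)
  show "z0 \<in> carrier F0" by simp
  show "dl z0 = dl y0 \<otimes>\<^bsub>F0\<^esub> inv\<^bsub>F0\<^esub> (z0 \<otimes>\<^bsub>F0\<^esub> z0)" by (simp add: phiz)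
  show "\<forall>f\<in>carrier F0. dl (dl f) = inv\<^bsub>F0\<^esub> (dl f \<otimes>\<^bsub>F0\<^esub> dl f)" by (simp add: phiphi)
  show "(\<lambda>(f, k1, k2). psi_map F0 dl z0 f k1 k2) ` (carrier F0 \<times> Z2 \<times> Z2) = carrier F0"
    by (rule psi_img)
qed

end

context sb1
begin

definition "hh a = (if a \<in> Hs then (a, 0::nat) else (pl a (ng t), 1))"

lemma hh_H: "f \<in> Hs \<Longrightarrow> hh f = (f, 0)" by (simp add: hh_def)
lemma hh_t: "f \<in> Hs \<Longrightarrow> hh (pl f t) = (f, 1)"
  using plt_nH[of f] by (simp add: hh_def pl_assoc)

lemma hh_bij: "bij_betw hh A (std_carrier F0)"
proof (rule bij_betw_byWitness[where f'="\<lambda>(f, k). if k = 0 then f else pl f t"])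
  show "\<forall>a\<in>A. (\<lambda>(f, k). if k = 0 then f else pl f t) (hh a) = a"
    by (auto simp: hh_def pl_assoc)
  show "\<forall>a'\<in>std_carrier F0. hh ((\<lambda>(f, k). if k = 0 then f else pl f t) a') = a'"
    by (auto simp: std_carrier_def Z2_def hh_H hh_t)
  show "hh ` A \<subseteq> std_carrier F0"
  proof
    fix p assume "p \<in> hh ` A"
    then obtain a where a: "a \<in> A" "p = hh a" by blast
    show "p \<in> std_carrier F0"
    proof (cases "a \<in> Hs")
      case True then show ?thesis using a by (simp add: hh_H std_carrier_def Z2_def)
    next
      case False
      then obtain f where "f \<in> Hs" "a = pl f t" using decomp a by blast
      then show ?thesis using a by (simp add: hh_t std_carrier_def Z2_def)
    qed
  qed
  show "(\<lambda>(f, k). if k = 0 then f else pl f t) ` std_carrier F0 \<subseteq> A"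
    by (auto simp: std_carrier_def Z2_def)
qed

lemma cases_A:
  assumes "a \<in> A"
  obtains (H) "a \<in> Hs" | (T) f where "f \<in> Hs" "a = pl f t"
  using decomp assms by blast

lemma hh_add: "a \<in> A \<Longrightarrow> b \<in> A \<Longrightarrow> hh (pl a b) = std_add F0 y0 (hh a) (hh b)"
proof -
  assume a: "a \<in> A" and b: "b \<in> A"
  show ?thesis
  using a proof (cases rule: cases_A)
    case H note f1 = H
    show ?thesis
    using b proof (cases rule: cases_A)
      case H
      then show ?thesis using f1 by (simp add: hh_H std_add_def sgn_act_def kk_y_def)
    next
      case (T f2)
      have "pl a b = pl (pl a f2) t" using f1 T by (simp add: pl_assoc)
      then show ?thesis using f1 T by (simp add: hh_H hh_t std_add_def sgn_act_def kk_y_def)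
    qed
  next
    case (T f1)
    show ?thesis
    using b proof (cases rule: cases_A)
      case H
      have "pl a b = pl (pl f1 (ng b)) t" using T H by (simp add: pl_assoc conj)
      then show ?thesis using T H by (simp add: hh_H hh_t std_add_def sgn_act_def kk_y_def)
    next
      case T2: (T f2)
      have "pl a b = pl f1 (pl (pl t f2) t)" using T T2 by (simp add: pl_assoc)
      also have "\<dots> = pl (pl f1 (ng f2)) y0" using T T2 by (simp add: pl_assoc conj y0_def)
      finally show ?thesis using T T2 by (simp add: hh_H hh_t std_add_def sgn_act_def kk_y_def)
    qed
  qed
qed

lemma hh_circ: "a \<in> A \<Longrightarrow> b \<in> A \<Longrightarrow> hh (ci a b) = std_circ F0 y0 (psi_map F0 dl z0) (hh a) (hh b)"
proof -
  assume a: "a \<in> A" and b: "b \<in> A"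
  show ?thesis
  using a proof (cases rule: cases_A)
    case H note f1 = H
    show ?thesis
    using b proof (cases rule: cases_A)
      case H
      then show ?thesis using f1 by (simp add: ciH hh_H std_circ_def sgn_act_def kk_y_def psi_map_def)
    next
      case (T f2)
      have "ci a b = pl (pl (pl a f2) (dl a)) t" using f1 T
        by (simp add: ci_lm lm_add fixH lmt pl_assoc lcomm)
      then show ?thesis using f1 T by (simp add: hh_H hh_t std_circ_def sgn_act_def kk_y_def psi_map_def)
    qed
  next
    case (T f1)
    show ?thesis
    using b proof (cases rule: cases_A)
      case H
      have "ci a b = pl (pl f1 (ng b)) t" using T H by (simp add: ci_lm fixH pl_assoc conj)
      then show ?thesis using T H by (simp add: hh_H hh_t std_circ_def sgn_act_def kk_y_def psi_map_def)
    next
      case T2: (T f2)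
      define Xx where "Xx = pl f2 (pl z0 (ng (dl f1)))"
      have XxH: "Xx \<in> Hs" unfolding Xx_def using T2 T by simp
      have "ci a b = pl a (pl f2 (pl (dl a) t))" using T T2 by (simp add: ci_lm lm_add fixH lmt)
      also have "\<dots> = pl f1 (pl t (pl Xx t))" using T T2 by (simp add: dl_Ht Xx_def pl_assoc)
      also have "\<dots> = pl f1 (pl (pl t Xx) t)" using T XxH by (simp add: pl_assoc)
      also have "\<dots> = pl f1 (pl (pl (ng Xx) t) t)" using XxH by (simp add: conj)
      also have "\<dots> = pl (pl f1 (ng Xx)) y0" using T XxH by (simp add: pl_assoc y0_def)
      also have "\<dots> = pl (pl (pl f1 (ng f2)) (pl (dl f1) (ng z0))) y0"
        using T T2 by (simp add: Xx_def ng_pl pl_assoc comm lcomm)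
      finally show ?thesis using T T2 by (simp add: hh_H hh_t std_circ_def sgn_act_def kk_y_def psi_map_def)
    qed
  qed
qed

lemma forward: "\<exists>(F :: 'a monoid) y phi z h. admissible_params F y phi z \<and>
     brace_iso A pl ci (std_carrier F) (std_add F y) (std_circ F y (psi_map F phi z)) h"
  using adm hh_bij hh_add hh_circ unfolding brace_iso_def by blast

end

lemma transport:
  fixes F :: "'b monoid" and g :: "'b \<Rightarrow> nat" and A :: "'a set"
  assumes adm: "admissible_params F y phi z"
    and iso: "brace_iso A pl ci (std_carrier F) (std_add F y) (std_circ F y (psi_map F phi z)) h"
    and inj: "inj_on g (carrier F)"
  shows "\<exists>(F' :: nat monoid) y' phi' z' h'. admissible_params F' y' phi' z' \<and>
     brace_iso A pl ci (std_carrier F') (std_add F' y') (std_circ F' y' (psi_map F' phi' z')) h'"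
proof -
  have cgF: "comm_group F" and finF: "finite (carrier F)" and ntF: "carrier F \<noteq> {\<one>\<^bsub>F\<^esub>}"
    and yC: "y \<in> carrier F" and yy: "y \<otimes>\<^bsub>F\<^esub> y = \<one>\<^bsub>F\<^esub>" and phom: "phi \<in> hom F F"
    and zC: "z \<in> carrier F" and pz: "phi z = phi y \<otimes>\<^bsub>F\<^esub> inv\<^bsub>F\<^esub> (z \<otimes>\<^bsub>F\<^esub> z)"
    and pp: "\<forall>f\<in>carrier F. phi (phi f) = inv\<^bsub>F\<^esub> (phi f \<otimes>\<^bsub>F\<^esub> phi f)"
    and img: "(\<lambda>(f, k1, k2). psi_map F phi z f k1 k2) ` (carrier F \<times> Z2 \<times> Z2) = carrier F"
    using adm unfolding admissible_params_def by blast+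
  interpret F: comm_group F by (rule cgF)
  define gi where "gi = inv_into (carrier F) g"
  define F' where "F' = \<lparr>carrier = g ` carrier F, monoid.mult = (\<lambda>m n. g (gi m \<otimes>\<^bsub>F\<^esub> gi n)), one = g \<one>\<^bsub>F\<^esub>\<rparr>"
  have cF': "carrier F' = g ` carrier F" by (simp add: F'_def)
  have gi: "\<And>x. x \<in> carrier F \<Longrightarrow> gi (g x) = x" using inj by (simp add: gi_def inv_into_f_f)
  have hom: "g \<in> hom F F'" by (rule homI) (auto simp: F'_def gi)
  have "comm_group (F'\<lparr>carrier := g ` carrier F, one := g \<one>\<^bsub>F\<^esub>\<rparr>)"
    by (rule F.hom_imp_img_comm_group[OF hom])
  moreover have "F'\<lparr>carrier := g ` carrier F, one := g \<one>\<^bsub>F\<^esub>\<rparr> = F'" by (simp add: F'_def)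
  ultimately have cg: "comm_group F'" by simp
  interpret F': comm_group F' by (rule cg)
  interpret gh: group_hom F F' g unfolding group_hom_def group_hom_axioms_def using F.is_group F'.is_group hom by simp
  interpret ph: group_hom F F phi unfolding group_hom_def group_hom_axioms_def using F.is_group phom by simp
  have sg: "\<And>k f. f \<in> carrier F \<Longrightarrow> sgn_act F' k (g f) = g (sgn_act F k f)"
    by (simp add: sgn_act_def)
  have kg: "\<And>k1 k2. kk_y F' (g y) k1 k2 = g (kk_y F y k1 k2)"
    by (simp add: kk_y_def)
  have sgC: "\<And>k f. f \<in> carrier F \<Longrightarrow> sgn_act F k f \<in> carrier F" by (simp add: sgn_act_def)
  have kC: "\<And>k1 k2. kk_y F y k1 k2 \<in> carrier F" using yC by (simp add: kk_y_def)
  define phi' where "phi' = (\<lambda>m. g (phi (gi m)))"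
  have phig: "\<And>x. x \<in> carrier F \<Longrightarrow> phi' (g x) = g (phi x)" by (simp add: phi'_def gi)
  have psig: "\<And>f k1 k2. f \<in> carrier F \<Longrightarrow>
      psi_map F' phi' (g z) (g f) k1 k2 = g (psi_map F phi z f k1 k2)"
    using zC by (simp add: psi_map_def phig)
  have psiC: "\<And>f k1 k2. f \<in> carrier F \<Longrightarrow> psi_map F phi z f k1 k2 \<in> carrier F"
    using zC by (simp add: psi_map_def)
  define G where "G = (\<lambda>p::'b \<times> nat. (g (fst p), snd p))"
  have adm': "admissible_params F' (g y) phi' (g z)"
    unfolding admissible_params_def
  proof (intro conjI)
    show "comm_group F'" by (rule cg)
    show "finite (carrier F')" using finF by (simp add: cF')
    show "carrier F' \<noteq> {\<one>\<^bsub>F'\<^esub>}"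
    proof
      assume a: "carrier F' = {\<one>\<^bsub>F'\<^esub>}"
      have "carrier F = {\<one>\<^bsub>F\<^esub>}"
      proof (intro equalityI subsetI)
        fix x assume "x \<in> carrier F"
        then have "g x \<in> carrier F'" by simp
        then have "g x = g \<one>\<^bsub>F\<^esub>" using a gh.hom_one by simp
        then have "x = \<one>\<^bsub>F\<^esub>" using inj_onD[OF inj] \<open>x \<in> carrier F\<close> by simp
        then show "x \<in> {\<one>\<^bsub>F\<^esub>}" by simp
      qed simp
      then show False using ntF by simp
    qed
    show "g y \<in> carrier F'" using yC by simp
    show "g y \<otimes>\<^bsub>F'\<^esub> g y = \<one>\<^bsub>F'\<^esub>" using yy yC
      by (simp flip: gh.hom_mult)
    show "phi' \<in> hom F' F'"
    proof (rule homI)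
      fix m assume "m \<in> carrier F'"
      then show "phi' m \<in> carrier F'" by (auto simp: cF' phig)
    next
      fix m n assume "m \<in> carrier F'" "n \<in> carrier F'"
      then obtain a b where "a \<in> carrier F" "b \<in> carrier F" "m = g a" "n = g b" by (auto simp: cF')
      then show "phi' (m \<otimes>\<^bsub>F'\<^esub> n) = phi' m \<otimes>\<^bsub>F'\<^esub> phi' n"
        by (simp add: phig flip: gh.hom_mult)
    qed
    show "g z \<in> carrier F'" using zC by simp
    show "phi' (g z) = phi' (g y) \<otimes>\<^bsub>F'\<^esub> inv\<^bsub>F'\<^esub> (g z \<otimes>\<^bsub>F'\<^esub> g z)"
      using pz yC zC by (simp add: phig flip: gh.hom_mult gh.hom_inv)
    show "\<forall>m\<in>carrier F'. phi' (phi' m) = inv\<^bsub>F'\<^esub> (phi' m \<otimes>\<^bsub>F'\<^esub> phi' m)"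
    proof
      fix m assume "m \<in> carrier F'"
      then obtain a where a: "a \<in> carrier F" "m = g a" by (auto simp: cF')
      have "phi (phi a) = inv\<^bsub>F\<^esub> (phi a \<otimes>\<^bsub>F\<^esub> phi a)" using pp a by blast
      then show "phi' (phi' m) = inv\<^bsub>F'\<^esub> (phi' m \<otimes>\<^bsub>F'\<^esub> phi' m)"
        using a by (simp add: phig flip: gh.hom_mult gh.hom_inv)
    qed
    show "(\<lambda>(f, k1, k2). psi_map F' phi' (g z) f k1 k2) ` (carrier F' \<times> Z2 \<times> Z2) = carrier F'"
    proof (intro equalityI subsetI)
      fix m assume "m \<in> (\<lambda>(f, k1, k2). psi_map F' phi' (g z) f k1 k2) ` (carrier F' \<times> Z2 \<times> Z2)"
      then obtain f k1 k2 where "f \<in> carrier F" "k1 \<in> Z2" "k2 \<in> Z2"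
        "m = psi_map F' phi' (g z) (g f) k1 k2" by (auto simp: cF')
      then show "m \<in> carrier F'" using psiC psig by (simp add: cF')
    next
      fix m assume "m \<in> carrier F'"
      then obtain a where a: "a \<in> carrier F" "m = g a" by (auto simp: cF')
      then obtain f k1 k2 where f: "f \<in> carrier F" "k1 \<in> Z2" "k2 \<in> Z2" "a = psi_map F phi z f k1 k2"
      proof -
        have "a \<in> (\<lambda>(f, k1, k2). psi_map F phi z f k1 k2) ` (carrier F \<times> Z2 \<times> Z2)" using img a by simp
        then obtain p where p: "p \<in> carrier F \<times> Z2 \<times> Z2" "a = (\<lambda>(f, k1, k2). psi_map F phi z f k1 k2) p"
          by (rule imageE)
        obtain f k1 k2 where "p = (f, k1, k2)" by (cases p) blast
        then show ?thesis using p that[of f k1 k2] by simp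
      qed
      then have "m = psi_map F' phi' (g z) (g f) k1 k2" using a psig by simp
      then show "m \<in> (\<lambda>(f, k1, k2). psi_map F' phi' (g z) f k1 k2) ` (carrier F' \<times> Z2 \<times> Z2)"
        using f by (force simp: cF')
    qed
  qed
  have hb: "bij_betw h A (std_carrier F)" using iso by (simp add: brace_iso_def)
  have Gb: "bij_betw G (std_carrier F) (std_carrier F')"
    unfolding bij_betw_def
  proof
    show "inj_on G (std_carrier F)"
      proof (rule inj_onI)
      fix p q assume "p \<in> std_carrier F" "q \<in> std_carrier F" "G p = G q"
      then show "p = q" using inj_onD[OF inj, of "fst p" "fst q"] by (auto simp: G_def std_carrier_def prod_eq_iff)
    qed
    show "G ` std_carrier F = std_carrier F'"
    proof (intro equalityI subsetI)
      fix p assume "p \<in> G ` std_carrier F"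
      then show "p \<in> std_carrier F'" by (auto simp: G_def std_carrier_def cF')
    next
      fix p assume "p \<in> std_carrier F'"
      then obtain x k where xk: "x \<in> carrier F" "k \<in> Z2" "p = (g x, k)" by (auto simp: std_carrier_def cF')
      then have "p = G (x, k)" by (simp add: G_def)
      moreover have "(x, k) \<in> std_carrier F" using xk by (simp add: std_carrier_def)
      ultimately show "p \<in> G ` std_carrier F" by blast
    qed
  qed
  have Gadd: "\<And>p q. p \<in> std_carrier F \<Longrightarrow> q \<in> std_carrier F \<Longrightarrow>
      G (std_add F y p q) = std_add F' (g y) (G p) (G q)"
  proof -
    fix p q assume "p \<in> std_carrier F" "q \<in> std_carrier F"
    then obtain f1 k1 f2 k2 where "p = (f1, k1)" "q = (f2, k2)" "f1 \<in> carrier F" "f2 \<in> carrier F"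
      by (auto simp: std_carrier_def)
    then show "G (std_add F y p q) = std_add F' (g y) (G p) (G q)"
      apply (simp add: G_def std_add_def)
      apply (simp only: sg kg)
      apply (simp add: sgC kC)
      done
  qed
  have Gcirc: "\<And>p q. p \<in> std_carrier F \<Longrightarrow> q \<in> std_carrier F \<Longrightarrow>
      G (std_circ F y (psi_map F phi z) p q) = std_circ F' (g y) (psi_map F' phi' (g z)) (G p) (G q)"
  proof -
    fix p q assume "p \<in> std_carrier F" "q \<in> std_carrier F"
    then obtain f1 k1 f2 k2 where "p = (f1, k1)" "q = (f2, k2)" "f1 \<in> carrier F" "f2 \<in> carrier F"
      by (auto simp: std_carrier_def)
    moreover then have "sgn_act F k1 f2 \<in> carrier F" "psi_map F phi z f1 k1 k2 \<in> carrier F"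
      by (simp_all add: sgC psiC)
    ultimately show "G (std_circ F y (psi_map F phi z) p q) = std_circ F' (g y) (psi_map F' phi' (g z)) (G p) (G q)"
      apply (simp add: G_def std_circ_def)
      apply (simp only: sg kg psig)
      apply (simp only: gh.hom_mult F.m_closed kC)
      done
  qed
  have iso': "brace_iso A pl ci (std_carrier F') (std_add F' (g y))
     (std_circ F' (g y) (psi_map F' phi' (g z))) (G \<circ> h)"
    unfolding brace_iso_def
  proof (intro conjI ballI)
    show "bij_betw (G \<circ> h) A (std_carrier F')" by (rule bij_betw_trans[OF hb Gb])
  next
    fix a b assume a: "a \<in> A" and b: "b \<in> A"
    have ha: "h a \<in> std_carrier F" using bij_betw_apply[OF hb a] .
    have hb': "h b \<in> std_carrier F" using bij_betw_apply[OF hb b] .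
    have e: "h (pl a b) = std_add F y (h a) (h b)" "h (ci a b) = std_circ F y (psi_map F phi z) (h a) (h b)"
      using iso a b by (simp_all add: brace_iso_def)
    show "(G \<circ> h) (pl a b) = std_add F' (g y) ((G \<circ> h) a) ((G \<circ> h) b)"
      unfolding comp_def e(1) by (rule Gadd[OF ha hb'])
    show "(G \<circ> h) (ci a b) = std_circ F' (g y) (psi_map F' phi' (g z)) ((G \<circ> h) a) ((G \<circ> h) b)"
      unfolding comp_def e(2) by (rule Gcirc[OF ha hb'])
  qed
  show ?thesis using adm' iso' by blast
qed

context comm_group begin
lemma canc: "x \<in> carrier G \<Longrightarrow> y \<in> carrier G \<Longrightarrow> x \<otimes> (inv x \<otimes> y) = y"
  "x \<in> carrier G \<Longrightarrow> y \<in> carrier G \<Longrightarrow> inv x \<otimes> (x \<otimes> y) = y"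
  by (simp_all flip: m_assoc)
lemma canc2: "x \<in> carrier G \<Longrightarrow> y \<in> carrier G \<Longrightarrow> z \<in> carrier G \<Longrightarrow> x \<otimes> (y \<otimes> (inv x \<otimes> z)) = y \<otimes> z"
  "x \<in> carrier G \<Longrightarrow> y \<in> carrier G \<Longrightarrow> z \<in> carrier G \<Longrightarrow> inv x \<otimes> (y \<otimes> (x \<otimes> z)) = y \<otimes> z"
  by (simp_all add: m_lcomm[of y] canc)
lemma canc3: 
  "x \<in> carrier G \<Longrightarrow> y \<in> carrier G \<Longrightarrow> x \<otimes> (y \<otimes> inv x) = y"
  "x \<in> carrier G \<Longrightarrow> y \<in> carrier G \<Longrightarrow> inv x \<otimes> (y \<otimes> x) = y"
  by (simp_all add: m_comm[of y] canc)
lemma canc4: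
  "x \<in> carrier G \<Longrightarrow> a \<in> carrier G \<Longrightarrow> b \<in> carrier G \<Longrightarrow> x \<otimes> (a \<otimes> (b \<otimes> inv x)) = a \<otimes> b"
  "x \<in> carrier G \<Longrightarrow> a \<in> carrier G \<Longrightarrow> b \<in> carrier G \<Longrightarrow> inv x \<otimes> (a \<otimes> (b \<otimes> x)) = a \<otimes> b"
  "x \<in> carrier G \<Longrightarrow> a \<in> carrier G \<Longrightarrow> b \<in> carrier G \<Longrightarrow> c \<in> carrier G \<Longrightarrow> x \<otimes> (a \<otimes> (b \<otimes> (inv x \<otimes> c))) = a \<otimes> (b \<otimes> c)"
  "x \<in> carrier G \<Longrightarrow> a \<in> carrier G \<Longrightarrow> b \<in> carrier G \<Longrightarrow> c \<in> carrier G \<Longrightarrow> inv x \<otimes> (a \<otimes> (b \<otimes> (x \<otimes> c))) = a \<otimes> (b \<otimes> c)"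
  by (simp_all add: m_lcomm[of x a] m_lcomm[of "inv x" a] canc2 canc3)
lemma canc5:
  "x \<in> carrier G \<Longrightarrow> a \<in> carrier G \<Longrightarrow> b \<in> carrier G \<Longrightarrow> d \<in> carrier G \<Longrightarrow> x \<otimes> (a \<otimes> (b \<otimes> (d \<otimes> inv x))) = a \<otimes> (b \<otimes> d)"
  "x \<in> carrier G \<Longrightarrow> a \<in> carrier G \<Longrightarrow> b \<in> carrier G \<Longrightarrow> d \<in> carrier G \<Longrightarrow> inv x \<otimes> (a \<otimes> (b \<otimes> (d \<otimes> x))) = a \<otimes> (b \<otimes> d)"
  "x \<in> carrier G \<Longrightarrow> a \<in> carrier G \<Longrightarrow> b \<in> carrier G \<Longrightarrow> d \<in> carrier G \<Longrightarrow> c \<in> carrier G \<Longrightarrow> x \<otimes> (a \<otimes> (b \<otimes> (d \<otimes> (inv x \<otimes> c)))) = a \<otimes> (b \<otimes> (d \<otimes> c))"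
  "x \<in> carrier G \<Longrightarrow> a \<in> carrier G \<Longrightarrow> b \<in> carrier G \<Longrightarrow> d \<in> carrier G \<Longrightarrow> c \<in> carrier G \<Longrightarrow> inv x \<otimes> (a \<otimes> (b \<otimes> (d \<otimes> (x \<otimes> c)))) = a \<otimes> (b \<otimes> (d \<otimes> c))"
  by (simp_all add: m_lcomm[of x a] m_lcomm[of "inv x" a] canc4)
lemmas cgs = m_ac inv_mult canc canc2 canc3 canc4 canc5
end

locale rv = sbrace +
  fixes F :: "'b monoid" and y phi z hm
  assumes fin: "finite A" and adm: "admissible_params F y phi z"
    and iso: "brace_iso A pl ci (std_carrier F) (std_add F y) (std_circ F y (psi_map F phi z)) hm"
begin

lemma cgF: "comm_group F" and finF: "finite (carrier F)" and ntF: "carrier F \<noteq> {\<one>\<^bsub>F\<^esub>}"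
    and yC: "y \<in> carrier F" and yy: "y \<otimes>\<^bsub>F\<^esub> y = \<one>\<^bsub>F\<^esub>" and phom: "phi \<in> hom F F"
    and zC: "z \<in> carrier F" and pz: "phi z = phi y \<otimes>\<^bsub>F\<^esub> inv\<^bsub>F\<^esub> (z \<otimes>\<^bsub>F\<^esub> z)"
    and pp: "\<forall>f\<in>carrier F. phi (phi f) = inv\<^bsub>F\<^esub> (phi f \<otimes>\<^bsub>F\<^esub> phi f)"
    and img: "(\<lambda>(f, k1, k2). psi_map F phi z f k1 k2) ` (carrier F \<times> Z2 \<times> Z2) = carrier F"
  using adm unfolding admissible_params_def by blast+

sublocale F: comm_group F by (rule cgF)
sublocale ph: group_hom F F phi
  unfolding group_hom_def group_hom_axioms_def using F.is_group phom by simp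

lemma hb: "bij_betw hm A (std_carrier F)" using iso unfolding brace_iso_def by (rule conjunct1)
lemma hall: "\<forall>a\<in>A. \<forall>b\<in>A. hm (pl a b) = std_add F y (hm a) (hm b) \<and>
   hm (ci a b) = std_circ F y (psi_map F phi z) (hm a) (hm b)"
  using iso unfolding brace_iso_def by (rule conjunct2)
lemma hadd: "a \<in> A \<Longrightarrow> b \<in> A \<Longrightarrow> hm (pl a b) = std_add F y (hm a) (hm b)"
  using hall by simp
lemma hcirc: "a \<in> A \<Longrightarrow> b \<in> A \<Longrightarrow> hm (ci a b) = std_circ F y (psi_map F phi z) (hm a) (hm b)"
  using hall by simp
lemma hC: "a \<in> A \<Longrightarrow> hm a \<in> carrier F \<times> {0, 1}"
  using bij_betw_apply[OF hb] by (simp add: std_carrier_def Z2_def)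
lemma hinj: "a \<in> A \<Longrightarrow> b \<in> A \<Longrightarrow> hm a = hm b \<Longrightarrow> a = b"
proof -
  assume "a \<in> A" "b \<in> A" "hm a = hm b"
  moreover have "inj_on hm A" using hb unfolding bij_betw_def by (rule conjunct1)
  ultimately show "a = b" unfolding inj_on_def by blast
qed
lemma hsurj: "p \<in> carrier F \<times> {0, 1} \<Longrightarrow> \<exists>a\<in>A. hm a = p"
proof -
  assume "p \<in> carrier F \<times> {0, 1}"
  moreover have "hm ` A = carrier F \<times> {0, 1}" using hb unfolding bij_betw_def std_carrier_def Z2_def by (rule conjunct2)
  ultimately show ?thesis by (metis imageE)
qed

lemma yy2: "x \<in> carrier F \<Longrightarrow> y \<otimes>\<^bsub>F\<^esub> (y \<otimes>\<^bsub>F\<^esub> x) = x"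
  using yy yC by (simp flip: F.m_assoc)

lemma h_ze: "hm ze = (\<one>\<^bsub>F\<^esub>, 0)"
proof -
  obtain f k where fk: "hm ze = (f, k)" "f \<in> carrier F" "k \<in> {0, 1}" using hC[OF zeA] by auto
  have "hm ze = std_add F y (hm ze) (hm ze)" using hadd[OF zeA zeA] by simp
  then have e: "(f, k) = std_add F y (f, k) (f, k)" using fk by simp
  then have k: "k = 0" using fk by (auto simp: std_add_def)
  then have "f = f \<otimes>\<^bsub>F\<^esub> f" using e fk by (simp add: std_add_def sgn_act_def kk_y_def)
  then have "f = \<one>\<^bsub>F\<^esub>" using fk by simp
  then show ?thesis using fk k by simp
qed

definition "Nn p = (if snd p = 0 then (inv\<^bsub>F\<^esub> (fst p), 0::nat) else (fst p \<otimes>\<^bsub>F\<^esub> y, 1))"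

lemma N_C: "p \<in> carrier F \<times> {0, 1} \<Longrightarrow> Nn p \<in> carrier F \<times> {0, 1}"
  using yC by (auto simp: Nn_def)

lemma N_add: "p \<in> carrier F \<times> {0, 1} \<Longrightarrow> std_add F y p (Nn p) = (\<one>\<^bsub>F\<^esub>, 0)"
proof -
  assume "p \<in> carrier F \<times> {0, 1}"
  then obtain f k where fk: "p = (f, k)" "f \<in> carrier F" "k = 0 \<or> k = 1" by auto
  then show ?thesis
  proof (elim disjE)
    assume "k = 0" then show ?thesis using fk by (simp add: Nn_def std_add_def sgn_act_def kk_y_def)
  next
    assume "k = 1" then show ?thesis using fk yC by (simp add: Nn_def std_add_def sgn_act_def kk_y_def F.cgs)
  qed
qed

lemma h_ng: "a \<in> A \<Longrightarrow> hm (ng a) = Nn (hm a)"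
proof -
  assume a: "a \<in> A"
  obtain c where c: "c \<in> A" "hm c = Nn (hm a)" using hsurj[OF N_C[OF hC[OF a]]] by blast
  have "hm (pl a c) = hm ze" using hadd[OF a c(1)] c N_add[OF hC[OF a]] h_ze by simp
  then have "pl a c = ze" using hinj a c by simp
  then have "ng a = c" using G.inv_equality[of c a] G.inv_comm[of a c] a c by simp
  then show ?thesis using c by simp
qed

definition LM :: "'b \<times> nat \<Rightarrow> 'b \<times> nat \<Rightarrow> 'b \<times> nat" where "LM p q = (if snd q = 0 then q else if snd p = 0 then (fst q \<otimes>\<^bsub>F\<^esub> phi (fst p), 1::nat)
   else (fst q \<otimes>\<^bsub>F\<^esub> inv\<^bsub>F\<^esub> (phi (fst p)) \<otimes>\<^bsub>F\<^esub> z, 1))"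

lemma LM_eq: "p \<in> carrier F \<times> {0, 1} \<Longrightarrow> q \<in> carrier F \<times> {0, 1} \<Longrightarrow>
   std_add F y (Nn p) (std_circ F y (psi_map F phi z) p q) = LM p q"
proof -
  assume "p \<in> carrier F \<times> {0, 1}" "q \<in> carrier F \<times> {0, 1}"
  then obtain f1 k1 f2 k2 where fk: "p = (f1, k1)" "f1 \<in> carrier F" "k1 = 0 \<or> k1 = 1"
    "q = (f2, k2)" "f2 \<in> carrier F" "k2 = 0 \<or> k2 = 1" by auto
  have C: "phi f1 \<in> carrier F" using fk by simp
  from fk(3,6) show ?thesis
  proof (elim disjE)
    assume "k1 = 0" "k2 = 0" then show ?thesis using fk
      by (simp add: Nn_def LM_def std_add_def std_circ_def sgn_act_def kk_y_def psi_map_def F.cgs)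
  next
    assume "k1 = 0" "k2 = 1" then show ?thesis using fk C
      by (simp add: Nn_def LM_def std_add_def std_circ_def sgn_act_def kk_y_def psi_map_def F.cgs)
  next
    assume "k1 = 1" "k2 = 0" then show ?thesis using fk yC yy
      by (simp add: Nn_def LM_def std_add_def std_circ_def sgn_act_def kk_y_def psi_map_def F.cgs yy2)
  next
    assume "k1 = 1" "k2 = 1" then show ?thesis using fk C yC zC
      by (simp add: Nn_def LM_def std_add_def std_circ_def sgn_act_def kk_y_def psi_map_def F.cgs)
  qed
qed

lemma h_lm: "a \<in> A \<Longrightarrow> b \<in> A \<Longrightarrow> hm (lm a b) = LM (hm a) (hm b)"
proof -
  assume a: "a \<in> A" and b: "b \<in> A"
  have "hm (lm a b) = std_add F y (hm (ng a)) (hm (ci a b))" by (simp add: lm_def hadd a b)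
  also have "\<dots> = LM (hm a) (hm b)" using LM_eq[OF hC[OF a] hC[OF b]] h_ng[OF a] hcirc[OF a b] by simp
  finally show ?thesis .
qed

definition "S = {c \<in> A. snd (hm c) = 1}"

lemma orb0: "b \<in> A \<Longrightarrow> snd (hm b) = 0 \<Longrightarrow> card (lam_orbit A pl ci b) = 1"
proof -
  assume b: "b \<in> A" and s: "snd (hm b) = 0"
  have "\<forall>a\<in>A. lm a b = b"
  proof
    fix a assume a: "a \<in> A"
    have "hm (lm a b) = hm b" using h_lm[OF a b] s by (simp add: LM_def)
    then show "lm a b = b" using hinj a b by simp
  qed
  then have "lam_orbit A pl ci b = (\<lambda>a. b) ` A" unfolding lam_orbit_def by simp
  also have "\<dots> = {b}" using b by blast
  finally show ?thesis by simp
qed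

lemma orb1: "b \<in> A \<Longrightarrow> snd (hm b) = 1 \<Longrightarrow> lam_orbit A pl ci b = S"
proof
  assume b: "b \<in> A" and s: "snd (hm b) = 1"
  obtain f2 where f2: "hm b = (f2, 1)" "f2 \<in> carrier F" using hC[OF b] s by auto
  show "lam_orbit A pl ci b \<subseteq> S"
  proof
    fix c assume "c \<in> lam_orbit A pl ci b"
    then obtain a where a: "a \<in> A" "c = lm a b" unfolding lam_orbit_def by blast
    then show "c \<in> S" using h_lm[OF a(1) b] f2 b by (simp add: S_def LM_def)
  qed
  show "S \<subseteq> lam_orbit A pl ci b"
  proof
    fix c assume "c \<in> S"
    then have c: "c \<in> A" "snd (hm c) = 1" by (auto simp: S_def)
    obtain g where g: "hm c = (g, 1)" "g \<in> carrier F" using hC[OF c(1)] c by auto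
    define d where "d = inv\<^bsub>F\<^esub> f2 \<otimes>\<^bsub>F\<^esub> g"
    have dC: "d \<in> carrier F" using f2 g by (simp add: d_def)
    have gd: "g = f2 \<otimes>\<^bsub>F\<^esub> d" using f2 g by (simp add: d_def F.canc)
    obtain f k1 k2 where fk: "f \<in> carrier F" "k1 \<in> Z2" "k2 \<in> Z2" "d = psi_map F phi z f k1 k2"
    proof -
      have "d \<in> (\<lambda>(f, k1, k2). psi_map F phi z f k1 k2) ` (carrier F \<times> Z2 \<times> Z2)" using img dC by simp
      then obtain p where p: "p \<in> carrier F \<times> Z2 \<times> Z2" "d = (\<lambda>(f, k1, k2). psi_map F phi z f k1 k2) p"
        by (rule imageE)
      obtain f k1 k2 where "p = (f, k1, k2)" by (cases p) blast
      then show ?thesis using p that[of f k1 k2] by simp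
    qed
    have "\<exists>p1 \<in> carrier F \<times> {0, 1}. LM p1 (hm b) = (f2 \<otimes>\<^bsub>F\<^esub> d, 1)"
    proof (cases "k2 = 0")
      case True
      then have "d = \<one>\<^bsub>F\<^esub>" using fk by (simp add: psi_map_def)
      then have "LM (\<one>\<^bsub>F\<^esub>, 0) (hm b) = (f2 \<otimes>\<^bsub>F\<^esub> d, 1)" using f2 by (simp add: LM_def)
      then show ?thesis by force
    next
      case False
      then have k2: "k2 = 1" using fk by (simp add: Z2_def)
      show ?thesis
      proof (cases "k1 = 0")
        case True
        then have "d = phi f" using fk k2 by (simp add: psi_map_def)
        then have "LM (f, 0) (hm b) = (f2 \<otimes>\<^bsub>F\<^esub> d, 1)" using f2 by (simp add: LM_def)
        then show ?thesis using fk by force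
      next
        case False
        then have k1: "k1 = 1" using fk by (simp add: Z2_def)
        then have dd: "d = phi f \<otimes>\<^bsub>F\<^esub> inv\<^bsub>F\<^esub> z" using fk k2 by (simp add: psi_map_def)
        define f1 where "f1 = inv\<^bsub>F\<^esub> f \<otimes>\<^bsub>F\<^esub> y \<otimes>\<^bsub>F\<^esub> inv\<^bsub>F\<^esub> z"
        have f1C: "f1 \<in> carrier F" using fk yC zC by (simp add: f1_def)
        have "phi f1 = inv\<^bsub>F\<^esub> (phi f) \<otimes>\<^bsub>F\<^esub> phi y \<otimes>\<^bsub>F\<^esub> inv\<^bsub>F\<^esub> (phi z)"
          using fk yC zC by (simp add: f1_def)
        also have "\<dots> = inv\<^bsub>F\<^esub> (phi f) \<otimes>\<^bsub>F\<^esub> z \<otimes>\<^bsub>F\<^esub> z"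
          using fk yC zC by (simp add: pz F.cgs)
        finally have pf1: "phi f1 = inv\<^bsub>F\<^esub> (phi f) \<otimes>\<^bsub>F\<^esub> z \<otimes>\<^bsub>F\<^esub> z" .
        have "LM (f1, 1) (hm b) = (f2 \<otimes>\<^bsub>F\<^esub> d, 1)" using f2 fk(1) zC
          by (simp add: LM_def pf1 dd F.cgs)
        then show ?thesis using f1C by force
      qed
    qed
    then obtain p1 where p1: "p1 \<in> carrier F \<times> {0, 1}" "LM p1 (hm b) = hm c" using g gd by auto
    obtain a where a: "a \<in> A" "hm a = p1" using hsurj[OF p1(1)] by blast
    have "hm (lm a b) = hm c" using h_lm[OF a(1) b] a p1 by simp
    then have "lm a b = c" using hinj a b c by simp
    then show "c \<in> lam_orbit A pl ci b" using a unfolding lam_orbit_def by blast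
  qed
qed

lemma card_S: "card S = card (carrier F)"
proof -
  have "inj_on hm S" using hinj by (auto simp: S_def inj_on_def)
  moreover have "hm ` S = carrier F \<times> {1::nat}"
  proof (intro equalityI subsetI)
    fix p assume "p \<in> hm ` S"
    then obtain x where x: "x \<in> A" "snd (hm x) = 1" "p = hm x" by (auto simp: S_def)
    then show "p \<in> carrier F \<times> {1}" using hC[OF x(1)] by (cases "hm x") auto
  next
    fix p assume p: "p \<in> carrier F \<times> {1::nat}"
    then obtain a where "a \<in> A" "hm a = p" using hsurj by auto
    then show "p \<in> hm ` S" using p by (auto simp: S_def)
  qed
  ultimately have "card S = card (carrier F \<times> {1::nat})" using card_image by fastforce
  also have "\<dots> = card (carrier F)" by (simp add: card_cartesian_product)
  finally show ?thesis .
qed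

lemma cardF: "card (carrier F) > 1"
proof -
  obtain x where "x \<in> carrier F" "x \<noteq> \<one>\<^bsub>F\<^esub>" using ntF F.one_closed by blast
  then have "{x, \<one>\<^bsub>F\<^esub>} \<subseteq> carrier F" by simp
  then have "card {x, \<one>\<^bsub>F\<^esub>} \<le> card (carrier F)" using finF card_mono by blast
  then show ?thesis using \<open>x \<noteq> \<one>\<^bsub>F\<^esub>\<close> by simp
qed

lemma backward: "card (Lambda_vertices A pl ci) = 1"
proof -
  have "Lambda_vertices A pl ci = {S}"
  proof (intro equalityI subsetI)
    fix L assume "L \<in> Lambda_vertices A pl ci"
    then obtain b where b: "b \<in> A" "L = lam_orbit A pl ci b" "card L > 1"
      unfolding Lambda_vertices_def by blast
    have "snd (hm b) \<noteq> 0" using orb0 b by fastforce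
    then have "snd (hm b) = 1" using hC[OF b(1)] by auto
    then show "L \<in> {S}" using orb1 b by simp
  next
    fix L assume "L \<in> {S}"
    then have L: "L = S" by simp
    obtain b where b: "b \<in> A" "hm b = (\<one>\<^bsub>F\<^esub>, 1)" using hsurj[of "(\<one>\<^bsub>F\<^esub>, 1)"] by auto
    have "lam_orbit A pl ci b = S" using orb1 b by simp
    then show "L \<in> Lambda_vertices A pl ci" unfolding Lambda_vertices_def
      using b L card_S cardF by auto
  qed
  then show ?thesis by simp
qed

end

theorem mainTheorem16:
  fixes A :: "'a set" and pl ci :: "'a \<Rightarrow> 'a \<Rightarrow> 'a"
  assumes "skew_brace A pl ci" and "finite A"
  shows "(card (Lambda_vertices A pl ci) = 1 \<longrightarrow>
            (\<exists>(F :: nat monoid) y phi z h. admissible_params F y phi z \<and>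
               brace_iso A pl ci (std_carrier F) (std_add F y)
                 (std_circ F y (psi_map F phi z)) h))
       \<and> (\<forall>(F :: 'b monoid) y phi z h. admissible_params F y phi z \<and>
               brace_iso A pl ci (std_carrier F) (std_add F y)
                 (std_circ F y (psi_map F phi z)) h
            \<longrightarrow> card (Lambda_vertices A pl ci) = 1)"
proof (intro conjI impI allI)
  assume c: "card (Lambda_vertices A pl ci) = 1"
  interpret s: sb1 A pl ci
    unfolding sb1_def sb1_axioms_def sbrace_def using assms c by (intro conjI)
  have ex: "\<exists>(F :: 'a monoid) y phi z h. admissible_params F y phi z \<and>
     brace_iso A pl ci (std_carrier F) (std_add F y) (std_circ F y (psi_map F phi z)) h"
    by (rule s.forward)
  then obtain F :: "'a monoid" and y phi z h where Fh: "admissible_params F y phi z"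
    "brace_iso A pl ci (std_carrier F) (std_add F y) (std_circ F y (psi_map F phi z)) h"
    by (elim exE conjE)
  have fF: "finite (carrier F)" using Fh(1) unfolding admissible_params_def by (elim conjE)
  have "\<exists>(g :: 'a \<Rightarrow> nat) n. g ` carrier F = {i. i < n} \<and> inj_on g (carrier F)"
    by (rule finite_imp_inj_to_nat_seg[OF fF])
  then obtain g :: "'a \<Rightarrow> nat" and n where "g ` carrier F = {i. i < n} \<and> inj_on g (carrier F)"
    by (elim exE)
  then have "inj_on g (carrier F)" by (rule conjunct2)
  then show "\<exists>(F :: nat monoid) y phi z h. admissible_params F y phi z \<and>
               brace_iso A pl ci (std_carrier F) (std_add F y)
                 (std_circ F y (psi_map F phi z)) h"
    by (rule transport[OF Fh(1) Fh(2)])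
next
  fix F :: "'b monoid" and y phi z h
  assume H: "admissible_params F y phi z \<and>
               brace_iso A pl ci (std_carrier F) (std_add F y)
                 (std_circ F y (psi_map F phi z)) h"
  interpret r: rv A pl ci F y phi z h
    unfolding rv_def rv_axioms_def sbrace_def using assms H by (intro conjI) (elim conjE, assumption)+
  show "card (Lambda_vertices A pl ci) = 1" by (rule r.backward)
qed

end
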